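(* Let $$G:=\Big\{\begin{pmatrix}0&1\\1&0\end{pmatrix}\Big\}\cup\operatorname{conv}\Big\{\begin{pmatrix}1&0\\0&1\end{pmatrix},\begin{pmatrix}1&1\\0&0\end{pmatrix}\Big\}\subseteq s(2).$$ Then the semigroup generated by $G$ equals $s(2)$, and $N_G(s(2))=4$; that is, $G^4=s(2)$ while $G^3\subsetneq s(2)$.
   Context: $s(2)$ is the set of $2\times2$ real matrices with non-negative entries whose columns each sum to $1$, a monoid under matrix multiplication. $\operatorname{conv}$ denotes convex hull. For a subset $G$, the semigroup generated by $G$ is the set of all finite products $g_1\cdots g_m$, $m\ge1$, $g_j\in G$; $G^k$ is the set of products of exactly $k$ elements of $G$. For $x$ in the generated semigroup, $N_G(x)$ is the least $m$ such that $x$ is a product of $m$ elements of $G$, and $N_G(S)=\sup_{x\in S}N_G(x)$. *)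

theory Defs
  imports "HOL-Analysis.Analysis" "HOL-Library.Extended_Nat"
begin

text \<open>2x2 real matrices are \<open>real^2^2\<close>; \<open>A $ i $ j\<close> is the entry in row i, column j;
  \<open>vector [vector [a,b], vector [c,d]]\<close> has rows (a,b) and (c,d).\<close>

definition s2 :: "(real^2^2) set" where
  "s2 = {A. (\<forall>i j. 0 \<le> A $ i $ j) \<and> (\<forall>j. (\<Sum>i\<in>UNIV. A $ i $ j) = 1)}"

text \<open>Products of exactly k elements of G.\<close>
definition gpow :: "(real^2^2) set \<Rightarrow> nat \<Rightarrow> (real^2^2) set" where
  "gpow G k = {foldr (**) xs (mat 1) | xs. length xs = k \<and> set xs \<subseteq> G}"

text \<open>Semigroup generated by G: all finite products of length at least 1.\<close>
definition gen_semigroup :: "(real^2^2) set \<Rightarrow> (real^2^2) set" where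
  "gen_semigroup G = (\<Union>k\<in>{1..}. gpow G k)"

definition NG :: "(real^2^2) set \<Rightarrow> real^2^2 \<Rightarrow> nat" where
  "NG G x = (LEAST m. 1 \<le> m \<and> x \<in> gpow G m)"

definition NG_set :: "(real^2^2) set \<Rightarrow> (real^2^2) set \<Rightarrow> enat" where
  "NG_set G S = (SUP x\<in>S. enat (NG G x))"

end

theory Submission imports Defs begin
definition M :: "real \<Rightarrow> real \<Rightarrow> real^2^2" where
  "M a b = vector [vector [a, b], vector [1 - a, 1 - b]]"

lemma M_nth: "M a b $ 1 $ 1 = a" "M a b $ 1 $ 2 = b" "M a b $ 2 $ 1 = 1 - a" "M a b $ 2 $ 2 = 1 - b"
  by (simp_all add: M_def)

lemma M_mult: "M a b ** M c d = M (b + c*(a-b)) (b + d*(a-b))"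
  by (simp add: vec_eq_iff forall_2 matrix_matrix_mult_def sum_2 M_nth) (simp add: algebra_simps)

lemma M_eq: "M a b = M c d \<longleftrightarrow> a = c \<and> b = d"
  by (metis M_nth(1,2))

lemma s2_M: "A \<in> s2 \<longleftrightarrow> (\<exists>a b. 0 \<le> a \<and> a \<le> 1 \<and> 0 \<le> b \<and> b \<le> 1 \<and> A = M a b)"
proof
  assume "A \<in> s2"
  then have h: "\<forall>i j. 0 \<le> A $ i $ j" "\<forall>j. A$1$j + A$2$j = 1" by (auto simp: s2_def sum_2)
  have "A = M (A$1$1) (A$1$2)"
    using h(2) by (simp add: vec_eq_iff forall_2 M_nth)
  then show "\<exists>a b. 0 \<le> a \<and> a \<le> 1 \<and> 0 \<le> b \<and> b \<le> 1 \<and> A = M a b"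
  proof (intro exI conjI)
    show "0 \<le> A$1$1" "0 \<le> A$1$2" using h(1) by auto
    have "0 \<le> A$2$1" "0 \<le> A$2$2" "A$1$1 + A$2$1 = 1" "A$1$2 + A$2$2 = 1" using h by auto
    then show "A$1$1 \<le> 1" "A$1$2 \<le> 1" by linarith+
  qed simp
next
  assume "\<exists>a b. 0 \<le> a \<and> a \<le> 1 \<and> 0 \<le> b \<and> b \<le> 1 \<and> A = M a b"
  then show "A \<in> s2" by (auto simp: s2_def sum_2 forall_2 M_nth)
qed

lemma G_char:
  "{vector [vector [0, 1], vector [1, 0]]}
     \<union> convex hull {vector [vector [1, 0], vector [0, 1]], vector [vector [1, 1], vector [0, 0]]}
   = {M 0 1} \<union> {M 1 t | t. 0 \<le> t \<and> t \<le> 1}"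
proof -
  have e: "vector [vector [0, 1], vector [1, 0]] = M 0 1"
     "vector [vector [1, 0], vector [0, 1]] = M 1 0" "vector [vector [1, 1], vector [0, 0]] = M 1 1"
    by (simp_all add: M_def)
  have "(1 - u) *\<^sub>R M 1 0 + u *\<^sub>R M 1 1 = M 1 u" for u
    by (simp add: vec_eq_iff forall_2 M_nth)
  then show ?thesis unfolding e segment_convex_hull[symmetric] closed_segment_def
    by auto
qed

lemma s2_mult: "A \<in> s2 \<Longrightarrow> B \<in> s2 \<Longrightarrow> A ** B \<in> s2"
proof -
  assume "A \<in> s2" "B \<in> s2"
  then obtain a b c d where h: "0 \<le> a" "a \<le> 1" "0 \<le> b" "b \<le> 1" "A = M a b"
    "0 \<le> c" "c \<le> 1" "0 \<le> d" "d \<le> 1" "B = M c d" unfolding s2_M by metis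
  have e1: "b + c*(a-b) = (1-c)*b + c*a" "b + d*(a-b) = (1-d)*b + d*a" by algebra+
  have "0 \<le> (1-c)*b + c*a" "(1-c)*b + c*a \<le> 1" "0 \<le> (1-d)*b + d*a" "(1-d)*b + d*a \<le> 1"
    using h by (auto intro!: convex_bound_le add_nonneg_nonneg mult_nonneg_nonneg)
  then show ?thesis unfolding s2_M h(5,10) M_mult e1 by blast
qed

lemma mat1_M: "mat 1 = M 1 0"
  by (simp add: vec_eq_iff forall_2 M_nth mat_def)

theorem proposition2:
  fixes G :: "(real^2^2) set"
  assumes "G = {vector [vector [0, 1], vector [1, 0]]}
              \<union> convex hull {vector [vector [1, 0], vector [0, 1]], vector [vector [1, 1], vector [0, 0]]}"
  shows "gen_semigroup G = s2 \<and> NG_set G s2 = 4 \<and> gpow G 4 = s2 \<and> gpow G 3 \<subset> s2"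
proof -
  have G: "G = {M 0 1} \<union> {M 1 t | t. 0 \<le> t \<and> t \<le> 1}" using assms G_char by simp
  have Gs2: "G \<subseteq> s2" unfolding G by (auto simp: s2_M M_eq)
  have I: "mat 1 \<in> G" unfolding G mat1_M by auto
  have fs2: "set xs \<subseteq> G \<Longrightarrow> foldr (**) xs (mat 1) \<in> s2" for xs
  proof (induction xs)
    case Nil then show ?case unfolding mat1_M s2_M by (auto simp: M_eq)
  next
    case (Cons x xs) then show ?case using Gs2 s2_mult by auto
  qed
  have pows2: "gpow G k \<subseteq> s2" for k unfolding gpow_def using fs2 by auto
  have mono: "gpow G m \<subseteq> gpow G (Suc m)" for m
  proof
    fix x assume "x \<in> gpow G m"
    then obtain xs where "length xs = m" "set xs \<subseteq> G" "x = foldr (**) xs (mat 1)"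
      unfolding gpow_def by blast
    then show "x \<in> gpow G (Suc m)" unfolding gpow_def using I
      by (auto intro!: exI[of _ "mat 1 # xs"])
  qed
  have mono': "m \<le> n \<Longrightarrow> gpow G m \<subseteq> gpow G n" for m n
    by (induction n rule: dec_induct) (use mono in auto)
  have g4: "s2 \<subseteq> gpow G 4"
  proof
    fix x assume "x \<in> s2"
    then obtain a b where ab: "0 \<le> a" "a \<le> 1" "0 \<le> b" "b \<le> 1" "x = M a b" unfolding s2_M by blast
    have P: "M 0 1 \<in> G" unfolding G by auto
    have A: "0 \<le> t \<Longrightarrow> t \<le> 1 \<Longrightarrow> M 1 t \<in> G" for t unfolding G by auto
    have in4: "x = foldr (**) [p,q,r,s] (mat 1) \<Longrightarrow> p \<in> G \<Longrightarrow> q \<in> G \<Longrightarrow> r \<in> G \<Longrightarrow> s \<in> G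
       \<Longrightarrow> x \<in> gpow G 4" for p q r s
      unfolding gpow_def by (rule CollectI, rule exI[of _ "[p,q,r,s]"]) auto
    consider "b < 1" "b \<le> a" | "a = 1" "b = 1" | "a < b" using ab by linarith
    then show "x \<in> gpow G 4"
    proof cases
      case 1
      define u where "u = (a-b)/(1-b)"
      have u: "0 \<le> u" "u \<le> 1" "b + u*(1-b) = a" using 1 ab by (auto simp: u_def field_simps)
      show ?thesis
        apply (rule in4[of "M 1 b" "M 0 1" "M 1 (1-u)" "M 0 1"])
        using u ab by (auto simp: M_mult mat1_M M_eq intro!: A P)
    next
      case 2
      show ?thesis
        apply (rule in4[of "M 1 1" "M 1 0" "M 1 0" "M 1 0"])
        using 2 ab by (auto simp: M_mult mat1_M M_eq intro!: A P)
    next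
      case 3
      define s where "s = (1-b)/(1-a)"
      have s: "0 \<le> s" "s \<le> 1" "1 - s*(1-a) = b" using 3 ab by (auto simp: s_def field_simps)
      show ?thesis
        apply (rule in4[of "M 1 a" "M 0 1" "M 1 s" "M 1 0"])
        using s ab by (auto simp: M_mult mat1_M M_eq algebra_simps intro!: A P)
    qed
  qed
  define x0 where "x0 = M (3/4) (1/4)"
  have x0s2: "x0 \<in> s2" unfolding x0_def s2_M by (intro exI[of _ "3/4"] exI[of _ "1/4"]) simp
  have x0n: "x0 \<notin> gpow G 3"
  proof
    assume "x0 \<in> gpow G 3"
    then obtain xs where xs: "length xs = 3" "set xs \<subseteq> G" "x0 = foldr (**) xs (mat 1)"
      unfolding gpow_def by blast
    then obtain p q r where "xs = [p,q,r]"
      by (auto simp: numeral_3_eq_3 length_Suc_conv)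
    with xs have pqr: "p \<in> G" "q \<in> G" "r \<in> G" "x0 = p ** (q ** (r ** M 1 0))"
      by (auto simp: mat1_M)
    show False
      using pqr unfolding G
      apply (auto simp: M_mult M_eq x0_def)
    proof -
      fix t ta :: real assume h: "0 \<le> ta" "ta \<le> 1" "t * 4 = 3" "2 + (1 - ta) * (1 - t) * 4 = 0"
      have "0 \<le> (1 - ta) * (1 - t)" using h by (intro mult_nonneg_nonneg) auto
      then show False using h(4) by linarith
    qed
  qed
  have x0n': "m \<le> 3 \<Longrightarrow> x0 \<notin> gpow G m" for m using mono'[of m 3] x0n by auto
  have g4eq: "gpow G 4 = s2" using g4 pows2 by auto
  have gen: "gen_semigroup G = s2"
    unfolding gen_semigroup_def using g4 pows2 by force
  have NG4: "x \<in> s2 \<Longrightarrow> NG G x \<le> 4" for x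
    unfolding NG_def by (rule Least_le) (use g4 in auto)
  have NGx0: "NG G x0 = 4"
  proof -
    have "4 \<le> NG G x0" unfolding NG_def
    proof (rule LeastI2[of _ 4])
      show "1 \<le> (4::nat) \<and> x0 \<in> gpow G 4" using g4 x0s2 by auto
    next
      fix x :: nat assume "1 \<le> x \<and> x0 \<in> gpow G x"
      then show "4 \<le> x" using x0n'[of x] by linarith
    qed
    then show ?thesis using NG4[OF x0s2] by simp
  qed
  have "NG_set G s2 = 4" unfolding NG_set_def
  proof (rule antisym)
    show "(SUP x\<in>s2. enat (NG G x)) \<le> 4"
      by (rule SUP_least) (use NG4 in \<open>auto simp: numeral_eq_enat\<close>)
    show "4 \<le> (SUP x\<in>s2. enat (NG G x))"
      using SUP_upper[OF x0s2, of "\<lambda>x. enat (NG G x)"] NGx0 by (simp add: numeral_eq_enat)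
  qed
  then show ?thesis using gen g4eq pows2 x0n x0s2 by blast
qed

end
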